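(* Let $q \geq 5$ be a prime power and let $\mathcal{X}$ be a plane curve of degree $q-1$ defined over $\mathbb{F}_q$ without $\mathbb{F}_q$-linear components with $\mathrm{N}_q(\mathcal{X}) = (q-1)^2$. Then $$\sum_{i=k_0}^{q-1} (i-k_0)(i-q+2)\,a_i = 3(q-1)^2 - 3k_0.$$ In particular, $(q - k_0 - 1)\,a_{q-1} \geq 3(q-1)^2 - 3k_0$.
   Context: $\mathcal{X}(\mathbb{F}_q)=\mathcal{X}\cap\mathbb{P}^2(\mathbb{F}_q)$, $\mathrm{N}_q(\mathcal{X})=\#\mathcal{X}(\mathbb{F}_q)$; "without $\mathbb{F}_q$-linear components" means no line defined over $\mathbb{F}_q$ is a component. For $0\le i\le q+1$, $a_i$ is the number of $\mathbb{F}_q$-lines $l$ with $\#(l\cap\mathcal{X}(\mathbb{F}_q))=i$, and $k_0 := \min\{i : a_i \neq 0\}$. *)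

theory Defs
  imports "HOL-Computational_Algebra.Polynomial" "HOL-Library.Cardinality"
begin

text \<open>Trivariate polynomials over a field are represented as nested univariate
polynomials: type 'a poly poly poly = 'a[X][Y][Z] (X innermost, Z outermost).
The monomial X^i Y^j Z^k has coefficient coeff (coeff (coeff F k) j) i.\<close>

definition eval3 :: "'a::comm_ring_1 poly poly poly \<Rightarrow> 'a \<Rightarrow> 'a \<Rightarrow> 'a \<Rightarrow> 'a" where
  "eval3 F x y z = poly (poly (poly F [:[:z:]:]) [:y:]) x"

definition homog_of_degree :: "'a::zero poly poly poly \<Rightarrow> nat \<Rightarrow> bool" where
  "homog_of_degree F d \<longleftrightarrow> F \<noteq> 0 \<and>
     (\<forall>i j k. coeff (coeff (coeff F k) j) i \<noteq> 0 \<longrightarrow> i + j + k = d)"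

definition linform :: "'a::comm_ring_1 \<Rightarrow> 'a \<Rightarrow> 'a \<Rightarrow> 'a poly poly poly" where
  "linform a b c = [: [: [:0, a:], [:b:] :], [: [:c:] :] :]"

definition no_linear_components :: "'a::field poly poly poly \<Rightarrow> bool" where
  "no_linear_components F \<longleftrightarrow>
     (\<forall>a b c. (a, b, c) \<noteq> (0, 0, 0) \<longrightarrow> \<not> linform a b c dvd F)"

definition proj_points :: "('a::field \<times> 'a \<times> 'a) set set" where
  "proj_points = {{(t * x, t * y, t * z) | t. t \<noteq> 0} | x y z. (x, y, z) \<noteq> (0, 0, 0)}"

definition curve_points :: "'a::field poly poly poly \<Rightarrow> ('a \<times> 'a \<times> 'a) set set" where
  "curve_points F = {P \<in> proj_points. \<forall>(x, y, z) \<in> P. eval3 F x y z = 0}"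

definition proj_lines :: "('a::field \<times> 'a \<times> 'a) set set set" where
  "proj_lines = {{P \<in> proj_points. \<forall>(x, y, z) \<in> P. a * x + b * y + c * z = 0}
                  | a b c. (a, b, c) \<noteq> (0, 0, 0)}"

text \<open>a_i: number of lines meeting the rational points of the curve in exactly i points.\<close>
definition line_count :: "'a::field poly poly poly \<Rightarrow> nat \<Rightarrow> nat" where
  "line_count F i = card {l \<in> proj_lines. card (l \<inter> curve_points F) = i}"

definition k0 :: "'a::field poly poly poly \<Rightarrow> nat" where
  "k0 F = (LEAST i. line_count F i \<noteq> 0)"

end

theory Submission
  imports Defs
begin


definition fc :: "'a::zero poly poly poly \<Rightarrow> nat \<Rightarrow> nat \<Rightarrow> nat \<Rightarrow> 'a" where
  "fc F i j k = coeff (coeff (coeff F k) j) i"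

lemma poly_sum_le:
  fixes p :: "'a::comm_semiring_1 poly"
  assumes "degree p \<le> n" shows "poly p x = (\<Sum>i\<le>n. coeff p i * x^i)"
proof -
  have "poly p x = poly (\<Sum>i\<le>n. monom (coeff p i) i) x"
    by (simp add: poly_as_sum_of_monoms'[OF assms])
  then show ?thesis by (simp add: poly_sum poly_monom)
qed

lemma homog_fc: "homog_of_degree F d \<Longrightarrow> fc F i j k \<noteq> 0 \<Longrightarrow> i + j + k = d"
  unfolding homog_of_degree_def fc_def by blast

lemma homog_deg3:
  assumes "homog_of_degree F d"
  shows "degree F \<le> d" "degree (coeff F k) \<le> d" "degree (coeff (coeff F k) j) \<le> d"
proof -
  show "degree (coeff (coeff F k) j) \<le> d"
  proof (rule degree_le, intro allI impI)
    fix i assume "d < i"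
    then show "coeff (coeff (coeff F k) j) i = 0" using homog_fc[OF assms, of i j k]
      unfolding fc_def by linarith
  qed
  show "degree (coeff F k) \<le> d"
  proof (rule degree_le, intro allI impI)
    fix j assume "d < j"
    show "coeff (coeff F k) j = 0"
    proof (rule poly_eqI)
      fix i show "coeff (coeff (coeff F k) j) i = coeff 0 i"
        using homog_fc[OF assms, of i j k] \<open>d < j\<close> unfolding fc_def by auto
    qed
  qed
  show "degree F \<le> d"
  proof (rule degree_le, intro allI impI)
    fix k assume "d < k"
    show "coeff F k = 0"
    proof (rule poly_eqI, rule poly_eqI)
      fix i j show "coeff (coeff (coeff F k) j) i = coeff (coeff 0 j) i"
        using homog_fc[OF assms, of i j k] \<open>d < k\<close> unfolding fc_def by auto
    qed
  qed
qed

lemma eval3_pCons: "eval3 (pCons a F) x y z = poly (poly a [:y:]) x + z * eval3 F x y z"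
  by (simp add: eval3_def)

lemma eval3_sum_k:
  assumes "degree F \<le> d"
  shows "eval3 F x y z = (\<Sum>k\<le>d. poly (poly (coeff F k) [:y:]) x * z^k)"
proof -
  have "eval3 F x y z = poly (poly (\<Sum>k\<le>d. coeff F k * [:[:z:]:]^k) [:y:]) x"
    unfolding eval3_def by (simp add: poly_sum_le[OF assms])
  also have "\<dots> = (\<Sum>k\<le>d. poly (poly (coeff F k) [:y:]) x * z^k)"
    by (simp add: poly_sum poly_power)
  finally show ?thesis .
qed

lemma poly2_sum:
  fixes p :: "'a::comm_ring_1 poly poly"
  assumes "degree p \<le> d" "\<And>j. degree (coeff p j) \<le> d"
  shows "poly (poly p [:y:]) x = (\<Sum>j\<le>d. (\<Sum>i\<le>d. coeff (coeff p j) i * x^i) * y^j)"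
proof -
  have "poly (poly p [:y:]) x = poly (\<Sum>j\<le>d. coeff p j * [:y:]^j) x"
    by (simp add: poly_sum_le[OF assms(1)])
  also have "\<dots> = (\<Sum>j\<le>d. poly (coeff p j) x * y^j)"
    by (simp add: poly_sum poly_power)
  also have "\<dots> = (\<Sum>j\<le>d. (\<Sum>i\<le>d. coeff (coeff p j) i * x^i) * y^j)"
    by (simp add: poly_sum_le[OF assms(2)])
  finally show ?thesis .
qed

lemma eval3_sum:
  assumes "homog_of_degree F d"
  shows "eval3 F x y z = (\<Sum>k\<le>d. \<Sum>j\<le>d. \<Sum>i\<le>d. fc F i j k * x^i * y^j * z^k)"
proof -
  have "eval3 F x y z = (\<Sum>k\<le>d. poly (poly (coeff F k) [:y:]) x * z^k)"
    by (rule eval3_sum_k[OF homog_deg3(1)[OF assms]])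
  also have "\<dots> = (\<Sum>k\<le>d. (\<Sum>j\<le>d. (\<Sum>i\<le>d. fc F i j k * x^i) * y^j) * z^k)"
    unfolding fc_def by (simp add: poly2_sum[OF homog_deg3(2,3)[OF assms]])
  also have "\<dots> = (\<Sum>k\<le>d. \<Sum>j\<le>d. \<Sum>i\<le>d. fc F i j k * x^i * y^j * z^k)"
    by (simp add: sum_distrib_right)
  finally show ?thesis .
qed

lemma eval3_scale:
  assumes "homog_of_degree F d"
  shows "eval3 F (s*x) (s*y) (s*z) = s^d * eval3 F x y z"
proof -
  have "fc F i j k * (s*x)^i * (s*y)^j * (s*z)^k = s^d * (fc F i j k * x^i * y^j * z^k)" for i j k
  proof (cases "fc F i j k = 0")
    case False
    then have "d = i + j + k" using homog_fc[OF assms] by metis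
    then show ?thesis by (simp add: power_mult_distrib power_add)
  qed simp
  then show ?thesis by (simp add: eval3_sum[OF assms] sum_distrib_left)
qed

lemma degree_sum_le_N:
  "(\<And>a. a \<in> A \<Longrightarrow> degree (f a) \<le> N) \<Longrightarrow> degree (sum f A) \<le> N"
  by (induction A rule: infinite_finite_induct) (auto intro: order.trans[OF degree_add_le])

lemma poly_zero_many_roots:
  fixes p :: "'a::field poly"
  assumes "\<forall>t\<in>T. poly p t = 0" "degree p < card T"
  shows "p = 0"
proof (rule ccontr)
  assume "p \<noteq> 0"
  then have "finite {x. poly p x = 0}" by (rule poly_roots_finite)
  moreover have "T \<subseteq> {x. poly p x = 0}" using assms by auto
  ultimately have "card T \<le> card {x. poly p x = 0}" by (rule card_mono)
  also have "\<dots> \<le> degree p" by (rule card_poly_roots_bound[OF \<open>p \<noteq> 0\<close>])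
  finally show False using assms by simp
qed

lemma sum_roots_zero:
  fixes c :: "nat \<Rightarrow> 'a::{finite,field}"
  assumes "n < CARD('a)" "\<And>y. (\<Sum>j\<le>n. c j * y^j) = 0" "j \<le> n"
  shows "c j = 0"
proof -
  define p where "p = (\<Sum>j\<le>n. monom (c j) j)"
  have "poly p y = (\<Sum>j\<le>n. c j * y^j)" for y by (simp add: p_def poly_sum poly_monom)
  moreover have "degree p \<le> n" unfolding p_def
    by (rule degree_sum_le_N) (auto intro: order.trans[OF degree_monom_le])
  moreover have "coeff p j = c j" using assms(3) by (simp add: p_def coeff_sum)
  ultimately show ?thesis using poly_zero_many_roots[of UNIV p] assms
    by (metis UNIV_I le_less_trans coeff_0)
qed



lemma coeff_mult_top:
  fixes p r :: "'a::comm_semiring_1 poly"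
  assumes "degree p \<le> m" "degree r \<le> n"
  shows "coeff (p * r) (m + n) = coeff p m * coeff r n"
proof -
  have "coeff (p * r) (m + n) = (\<Sum>i\<le>m+n. coeff p i * coeff r (m + n - i))"
    by (rule coeff_mult)
  also have "\<dots> = (\<Sum>i\<in>{m}. coeff p i * coeff r (m + n - i))"
  proof (rule sum.mono_neutral_right)
    show "\<forall>i\<in>{..m + n} - {m}. coeff p i * coeff r (m + n - i) = 0"
    proof
      fix i assume "i \<in> {..m + n} - {m}"
      then have "i < m \<or> i > m" by auto
      then show "coeff p i * coeff r (m + n - i) = 0"
        using assms by (auto simp: coeff_eq_0)
    qed
  qed auto
  finally show ?thesis by simp
qed

lemma coeff_lin_pow_top:
  fixes a b :: "'a::comm_semiring_1"
  shows "coeff ([:a, b:]^i) i = b^i \<and> degree ([:a, b:]^i) \<le> i"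
proof (induction i)
  case (Suc i)
  have d1: "degree [:a, b:] \<le> 1" by simp
  have "coeff ([:a, b:] * [:a, b:]^i) (1 + i) = coeff [:a,b:] 1 * coeff ([:a, b:]^i) i"
    by (rule coeff_mult_top[OF d1]) (use Suc in simp)
  moreover have "degree ([:a, b:] * [:a, b:]^i) \<le> 1 + i"
    by (rule order.trans[OF degree_mult_le]) (use Suc d1 in linarith)
  ultimately show ?case using Suc by simp
qed simp

lemma line_restrict:
  fixes F :: "'a::field poly poly poly"
  assumes hom: "homog_of_degree F d"
  obtains G where "\<And>t. poly G t = eval3 F (p1+t*q1) (p2+t*q2) (p3+t*q3)"
     "degree G \<le> d" "coeff G d = eval3 F q1 q2 q3"
proof -
  define G where "G = (\<Sum>k\<le>d. \<Sum>j\<le>d. \<Sum>i\<le>d.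
      smult (fc F i j k) ([:p1,q1:]^i * [:p2,q2:]^j * [:p3,q3:]^k))"
  have "poly G t = eval3 F (p1+t*q1) (p2+t*q2) (p3+t*q3)" for t
    by (simp add: G_def eval3_sum[OF hom] poly_sum poly_power algebra_simps)
  moreover have "degree G \<le> d" unfolding G_def
  proof (intro degree_sum_le_N)
    fix i j k
    show "degree (smult (fc F i j k) ([:p1,q1:]^i * [:p2,q2:]^j * [:p3,q3:]^k)) \<le> d"
    proof (cases "fc F i j k = 0")
      case False
      then have "i + j + k = d" using homog_fc[OF hom] by blast
      have "degree ([:p1,q1:]^i * [:p2,q2:]^j * [:p3,q3:]^k) \<le> i + j + k"
        using coeff_lin_pow_top[of p1 q1 i] coeff_lin_pow_top[of p2 q2 j] coeff_lin_pow_top[of p3 q3 k]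
        by (meson add_mono degree_mult_le order.trans)
      then show ?thesis using \<open>i + j + k = d\<close> by simp
    qed simp
  qed
  moreover have "coeff G d = eval3 F q1 q2 q3"
  proof -
    have "coeff (smult (fc F i j k) ([:p1,q1:]^i * [:p2,q2:]^j * [:p3,q3:]^k)) d
          = fc F i j k * q1^i * q2^j * q3^k" for i j k
    proof (cases "fc F i j k = 0")
      case False
      then have "i + j + k = d" using homog_fc[OF hom] by blast
      have A: "coeff ([:p1,q1:]^i * [:p2,q2:]^j) (i + j) = q1^i * q2^j"
        using coeff_lin_pow_top[of p1 q1 i] coeff_lin_pow_top[of p2 q2 j]
        by (simp add: coeff_mult_top)
      have B: "degree ([:p1,q1:]^i * [:p2,q2:]^j) \<le> i + j"
        using coeff_lin_pow_top[of p1 q1 i] coeff_lin_pow_top[of p2 q2 j]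
        by (meson add_mono degree_mult_le order.trans)
      have "coeff ([:p1,q1:]^i * [:p2,q2:]^j * [:p3,q3:]^k) (i + j + k) = q1^i * q2^j * q3^k"
        using coeff_mult_top[OF B, of "[:p3,q3:]^k" k] coeff_lin_pow_top[of p3 q3 k] A by simp
      then show ?thesis using \<open>i + j + k = d\<close> by (simp add: mult.assoc)
    qed simp
    then show ?thesis unfolding G_def coeff_sum eval3_sum[OF hom] coeff_smult by presburger
  qed
  ultimately show ?thesis using that by blast
qed



fun cls :: "'a::field \<times> 'a \<times> 'a \<Rightarrow> ('a \<times> 'a \<times> 'a) set" where
  "cls (x, y, z) = {(t * x, t * y, t * z) | t. t \<noteq> 0}"

definition lset :: "'a::field \<Rightarrow> 'a \<Rightarrow> 'a \<Rightarrow> ('a \<times> 'a \<times> 'a) set set" where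
  "lset a b c = {P \<in> proj_points. \<forall>(x, y, z) \<in> P. a * x + b * y + c * z = 0}"

lemma proj_points_eq: "proj_points = {cls (x, y, z) | x y z. (x, y, z) \<noteq> (0, 0, 0)}"
  by (simp only: proj_points_def cls.simps)

lemma proj_lines_eq: "proj_lines = {lset a b c | a b c. (a, b, c) \<noteq> (0, 0, 0)}"
  by (simp only: proj_lines_def lset_def)

lemma cls_self: "(x, y, z) \<in> cls (x, y, z)"
proof -
  have "(x, y, z) = (1 * x, 1 * y, 1 * z) \<and> (1::'a) \<noteq> 0" by simp
  then show ?thesis unfolding cls.simps by blast
qed

lemma cls_scale:
  assumes "s \<noteq> 0" shows "cls (s * x, s * y, s * z) = cls (x, y, z)"
proof (intro set_eqI iffI)
  fix p assume "p \<in> cls (s * x, s * y, s * z)"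
  then obtain t where t: "t \<noteq> 0" "p = (t * (s * x), t * (s * y), t * (s * z))" by auto
  then have "p = ((t * s) * x, (t * s) * y, (t * s) * z) \<and> t * s \<noteq> 0"
    using assms by (simp add: mult.assoc)
  then show "p \<in> cls (x, y, z)" unfolding cls.simps by blast
next
  fix p assume "p \<in> cls (x, y, z)"
  then obtain t where t: "t \<noteq> 0" "p = (t * x, t * y, t * z)" by auto
  then have "p = ((t / s) * (s * x), (t / s) * (s * y), (t / s) * (s * z)) \<and> t / s \<noteq> 0"
    using assms by simp
  then show "p \<in> cls (s * x, s * y, s * z)" unfolding cls.simps by blast
qed

lemma cls_mem_iff: "(u, v, w) \<in> cls (x, y, z) \<longleftrightarrow> (\<exists>t. t \<noteq> 0 \<and> u = t * x \<and> v = t * y \<and> w = t * z)"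
  by auto

lemma cls_eq_of_mem: "(u, v, w) \<in> cls (x, y, z) \<Longrightarrow> cls (u, v, w) = cls (x, y, z)"
proof -
  assume "(u, v, w) \<in> cls (x, y, z)"
  then obtain t where "t \<noteq> 0" "u = t * x" "v = t * y" "w = t * z" by auto
  then show ?thesis using cls_scale by simp
qed

lemma cls_eq_iff_mem: "cls (u, v, w) = cls (x, y, z) \<longleftrightarrow> (u, v, w) \<in> cls (x, y, z)"
  using cls_eq_of_mem cls_self by metis

lemma curve_mem:
  assumes hom: "homog_of_degree F d" and nz: "(x, y, z) \<noteq> (0, 0, 0)"
  shows "cls (x, y, z) \<in> curve_points F \<longleftrightarrow> eval3 F x y z = 0"
proof
  assume "cls (x, y, z) \<in> curve_points F"
  then show "eval3 F x y z = 0" unfolding curve_points_def using cls_self by fast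
next
  assume 0: "eval3 F x y z = 0"
  have "cls (x, y, z) \<in> proj_points" unfolding proj_points_eq using nz by blast
  moreover have "\<forall>(u, v, w) \<in> cls (x, y, z). eval3 F u v w = 0"
    using 0 by (auto simp: eval3_scale[OF hom])
  ultimately show "cls (x, y, z) \<in> curve_points F" unfolding curve_points_def by blast
qed

lemma lset_mem:
  assumes nz: "(x, y, z) \<noteq> (0, 0, 0)"
  shows "cls (x, y, z) \<in> lset a b c \<longleftrightarrow> a * x + b * y + c * z = 0"
proof
  assume "cls (x, y, z) \<in> lset a b c"
  then show "a * x + b * y + c * z = 0" unfolding lset_def using cls_self by fast
next
  assume 0: "a * x + b * y + c * z = 0"
  have "cls (x, y, z) \<in> proj_points" unfolding proj_points_eq using nz by blast
  moreover have "\<forall>(u, v, w) \<in> cls (x, y, z). a * u + b * v + c * w = 0"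
  proof (clarsimp)
    fix t :: 'a
    have "a * (t * x) + b * (t * y) + c * (t * z) = t * (a * x + b * y + c * z)"
      by (simp add: algebra_simps)
    then show "a * (t * x) + b * (t * y) + c * (t * z) = 0" using 0 by simp
  qed
  ultimately show "cls (x, y, z) \<in> lset a b c" unfolding lset_def by blast
qed



lemma vanish_plane:
  fixes F :: "'a::{finite,field} poly poly poly"
  assumes hom: "homog_of_degree F d" and d: "d = CARD('a) - 1" and q: "CARD('a) \<ge> 2"
    and cover: "\<And>x y z. a*x+b*y+c*z = 0 \<Longrightarrow> \<exists>s t. x = s*p1+t*q1 \<and> y = s*p2+t*q2 \<and> z = s*p3+t*q3"
    and big: "card (lset a b c \<inter> curve_points F) \<ge> CARD('a)"
    and on: "a*x+b*y+c*z = 0"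
  shows "eval3 F x y z = 0"
proof -
  obtain G where G: "\<And>t. poly G t = eval3 F (p1+t*q1) (p2+t*q2) (p3+t*q3)"
     "degree G \<le> d" "coeff G d = eval3 F q1 q2 q3"
    using line_restrict[OF hom] by metis
  define T where "T = {t. poly G t = 0}"
  define f where "f = (\<lambda>t. cls (p1+t*q1, p2+t*q2, p3+t*q3))"
  have incl: "lset a b c \<inter> curve_points F \<subseteq> f ` T \<union> (curve_points F \<inter> {cls (q1, q2, q3)})"
  proof
    fix X assume X: "X \<in> lset a b c \<inter> curve_points F"
    then obtain u v w where X_eq: "X = cls (u, v, w)" and nz: "(u, v, w) \<noteq> (0, 0, 0)"
      unfolding lset_def proj_points_eq by blast
    have "a*u+b*v+c*w = 0" using X X_eq cls_self unfolding lset_def by fast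
    then obtain s t where st: "u = s*p1+t*q1" "v = s*p2+t*q2" "w = s*p3+t*q3"
      using cover by blast
    show "X \<in> f ` T \<union> (curve_points F \<inter> {cls (q1, q2, q3)})"
    proof (cases "s = 0")
      case True
      then have "t \<noteq> 0" using nz st by auto
      then have "X = cls (q1, q2, q3)" using X_eq st True cls_scale by simp
      then show ?thesis using X by blast
    next
      case False
      have "(u, v, w) = (s * (p1 + (t/s)*q1), s * (p2 + (t/s)*q2), s * (p3 + (t/s)*q3))"
        using st False by (simp add: algebra_simps)
      then have Xe: "X = f (t/s)" unfolding f_def X_eq using cls_scale[OF False] by simp
      then have "eval3 F (p1 + (t/s)*q1) (p2 + (t/s)*q2) (p3 + (t/s)*q3) = 0"
        using X cls_self unfolding f_def curve_points_def by fast
      then have "t/s \<in> T" unfolding T_def using G(1) by simp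
      then show ?thesis using Xe by blast
    qed
  qed
  have cardT: "card (lset a b c \<inter> curve_points F) \<le> card T + (if eval3 F q1 q2 q3 = 0 then 1 else 0)"
  proof -
    have "card (lset a b c \<inter> curve_points F) \<le> card (f ` T \<union> (curve_points F \<inter> {cls (q1, q2, q3)}))"
      by (rule card_mono[OF _ incl]) simp
    also have "\<dots> \<le> card (f ` T) + card (curve_points F \<inter> {cls (q1, q2, q3)})"
      by (rule card_Un_le)
    also have "\<dots> \<le> card T + (if eval3 F q1 q2 q3 = 0 then 1 else 0)"
    proof -
      have "card (f ` T) \<le> card T" by (rule card_image_le) simp
      moreover have "card (curve_points F \<inter> {cls (q1, q2, q3)}) \<le> (if eval3 F q1 q2 q3 = 0 then 1 else 0)"
      proof (cases "eval3 F q1 q2 q3 = 0")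
        case True then show ?thesis by (simp add: card_le_Suc0_iff_eq)
      next
        case False
        then have "cls (q1, q2, q3) \<notin> curve_points F"
          using cls_self unfolding curve_points_def by fast
        then show ?thesis by simp
      qed
      ultimately show ?thesis by linarith
    qed
    finally show ?thesis .
  qed
  have Q0: "eval3 F q1 q2 q3 = 0"
  proof (rule ccontr)
    assume ne: "eval3 F q1 q2 q3 \<noteq> 0"
    then have "degree G < card T" using cardT big G(2) d q by simp
    then have "G = 0" using poly_zero_many_roots[of T G] unfolding T_def by blast
    then show False using G(3) ne by simp
  qed
  have G0: "G = 0"
  proof (rule ccontr)
    assume ne: "G \<noteq> 0"
    have "degree G \<noteq> d" using G(3) Q0 ne leading_coeff_0_iff by metis
    then have "degree G < d" using G(2) by simp
    then have "degree G < card T" using cardT big d q Q0 by simp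
    then show False using poly_zero_many_roots[of T G] ne unfolding T_def by blast
  qed
  obtain s t where st: "x = s*p1+t*q1" "y = s*p2+t*q2" "z = s*p3+t*q3"
    using cover[OF on] by blast
  show ?thesis
  proof (cases "s = 0")
    case True
    then show ?thesis using st eval3_scale[OF hom, of t q1 q2 q3] Q0 by simp
  next
    case False
    have "(x, y, z) = (s * (p1 + (t/s)*q1), s * (p2 + (t/s)*q2), s * (p3 + (t/s)*q3))"
      using st False by (simp add: algebra_simps)
    then have "eval3 F x y z = s^d * poly G (t/s)" using eval3_scale[OF hom] G(1) by simp
    then show ?thesis using G0 by simp
  qed
qed



definition td2 :: "'a::comm_ring_1 poly poly \<Rightarrow> nat \<Rightarrow> bool" where
  "td2 p n \<longleftrightarrow> (\<forall>j. coeff p j = 0 \<or> degree (coeff p j) + j \<le> n)"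

lemma td2_0: "td2 0 n" by (simp add: td2_def)

lemma td2_mono: "td2 p n \<Longrightarrow> n \<le> m \<Longrightarrow> td2 p m"
  unfolding td2_def by (meson order.trans)

lemma td2_add: assumes "td2 p n" "td2 q n" shows "td2 (p + q) n"
  unfolding td2_def
proof
  fix j
  show "coeff (p + q) j = 0 \<or> degree (coeff (p + q) j) + j \<le> n"
  proof (cases "coeff p j = 0")
    case True then show ?thesis using assms(2) by (simp add: td2_def)
  next
    case False
    show ?thesis
    proof (cases "coeff q j = 0")
      case True then show ?thesis using assms(1) by (simp add: td2_def)
    next
      case False
      have "degree (coeff p j) + j \<le> n" "degree (coeff q j) + j \<le> n"
        using assms \<open>coeff p j \<noteq> 0\<close> False unfolding td2_def by metis+
      then have "degree (coeff p j + coeff q j) \<le> n - j"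
        by (intro degree_add_le) linarith+
      then have "degree (coeff p j + coeff q j) + j \<le> n" using \<open>degree (coeff p j) + j \<le> n\<close> by linarith
      then show ?thesis by simp
    qed
  qed
qed

lemma td2_sum: "(\<And>a. a \<in> A \<Longrightarrow> td2 (f a) n) \<Longrightarrow> td2 (sum f A) n"
  by (induction A rule: infinite_finite_induct) (auto intro: td2_add simp: td2_0)

lemma td2_mult:
  fixes p q :: "'a::field poly poly"
  assumes p: "td2 p n" and q: "td2 q m" shows "td2 (p * q) (n + m)"
  unfolding td2_def
proof
  fix j
  have cm: "coeff (p * q) j = (\<Sum>i\<le>j. coeff p i * coeff q (j - i))" by (rule coeff_mult)
  show "coeff (p * q) j = 0 \<or> degree (coeff (p * q) j) + j \<le> n + m"
  proof (cases "j \<le> n + m")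
    case True
    have "degree (\<Sum>i\<le>j. coeff p i * coeff q (j - i)) \<le> n + m - j"
    proof (rule degree_sum_le_N)
      fix i assume i: "i \<in> {..j}"
      show "degree (coeff p i * coeff q (j - i)) \<le> n + m - j"
      proof (cases "coeff p i = 0 \<or> coeff q (j - i) = 0")
        case False
        then have "degree (coeff p i) + i \<le> n" "degree (coeff q (j - i)) + (j - i) \<le> m"
          using p q unfolding td2_def by metis+
        moreover have "degree (coeff p i * coeff q (j - i)) = degree (coeff p i) + degree (coeff q (j - i))"
          using False by (simp add: degree_mult_eq)
        ultimately show ?thesis using i by simp
      qed auto
    qed
    then have "degree (coeff (p * q) j) \<le> n + m - j" using cm by simp
    then have "degree (coeff (p * q) j) + j \<le> n + m" using True by linarith
    then show ?thesis by simp
  next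
    case False
    have "(\<Sum>i\<le>j. coeff p i * coeff q (j - i)) = 0"
    proof (rule sum.neutral, rule)
      fix i assume i: "i \<in> {..j}"
      show "coeff p i * coeff q (j - i) = 0"
      proof (rule ccontr)
        assume "coeff p i * coeff q (j - i) \<noteq> 0"
        then have "degree (coeff p i) + i \<le> n" "degree (coeff q (j - i)) + (j - i) \<le> m"
          using p q unfolding td2_def by auto
        then show False using False i by simp
      qed
    qed
    then show ?thesis using cm by simp
  qed
qed

lemma td2_1: "td2 (1 :: 'a::comm_ring_1 poly poly) 0"
  unfolding td2_def by (simp add: coeff_1)

lemma td2_pow:
  fixes p :: "'a::field poly poly"
  shows "td2 p n \<Longrightarrow> td2 (p ^ k) (k * n)"
  by (induction k) (auto simp: td2_1 intro: td2_mult)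

lemma td2_z0: "td2 [:[:0, \<alpha>:], [:\<beta>:]:] 1"
  unfolding td2_def
proof
  fix j :: nat
  show "coeff [:[:0, \<alpha>:], [:\<beta>:]:] j = 0 \<or> degree (coeff [:[:0, \<alpha>:], [:\<beta>:]:] j) + j \<le> 1"
    by (cases j) (auto simp: coeff_pCons split: nat.splits)
qed

lemma td2_coeffF:
  assumes hom: "homog_of_degree F d"
  shows "td2 (coeff F k) (d - k)"
  unfolding td2_def
proof
  fix j
  show "coeff (coeff F k) j = 0 \<or> degree (coeff (coeff F k) j) + j \<le> d - k"
  proof (cases "coeff (coeff F k) j = 0")
    case False
    then obtain i0 where "coeff (coeff (coeff F k) j) i0 \<noteq> 0"
      by (metis coeff_0 poly_eqI)
    then have "i0 + j + k = d" using homog_fc[OF hom] unfolding fc_def by blast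
    have "degree (coeff (coeff F k) j) \<le> d - k - j"
    proof (rule degree_le, intro allI impI)
      fix i assume "d - k - j < i"
      then show "coeff (coeff (coeff F k) j) i = 0"
        using homog_fc[OF hom, of i j k] \<open>i0 + j + k = d\<close> unfolding fc_def by linarith
    qed
    then show ?thesis using \<open>i0 + j + k = d\<close> by arith
  qed simp
qed

lemma td2_degree: "td2 p n \<Longrightarrow> degree p \<le> n"
  unfolding td2_def by (intro degree_le) (metis add_leD2 leD)

lemma td2_degree_coeff: "td2 p n \<Longrightarrow> degree (coeff p j) \<le> n"
  unfolding td2_def by (metis add_leD1 degree_0 zero_le)

lemma td2_zero:
  fixes R :: "'a::{finite,field} poly poly"
  assumes td: "td2 R n" and n: "n < CARD('a)" and van: "\<And>x y. poly (poly R [:y:]) x = 0"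
  shows "R = 0"
proof -
  have dR: "degree R \<le> n" by (rule td2_degree[OF td])
  have dC: "\<And>j. degree (coeff R j) \<le> n" by (rule td2_degree_coeff[OF td])
  have A: "(\<Sum>i\<le>n. coeff (coeff R j) i * x^i) = 0" if "j \<le> n" for x j
    using sum_roots_zero[OF n, of "\<lambda>j. (\<Sum>i\<le>n. coeff (coeff R j) i * x^i)", OF _ that]
      van poly2_sum[OF dR dC] by metis
  have "coeff (coeff R j) i = 0" for i j
  proof (cases "j \<le> n")
    case True
    show ?thesis
    proof (cases "i \<le> n")
      case True
      then show ?thesis using sum_roots_zero[OF n, of "\<lambda>i. coeff (coeff R j) i"] A[OF \<open>j \<le> n\<close>] by blast
    next
      case False then show ?thesis using dC[of j] by (simp add: coeff_eq_0)
    qed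
  next
    case False then show ?thesis using dR by (simp add: coeff_eq_0)
  qed
  then show ?thesis by (metis coeff_0 poly_eqI)
qed

lemma hom3: "poly (poly (poly F w) [:y:]) x = eval3 F x y (poly (poly w [:y:]) x)"
  by (induction F rule: pCons_induct) (simp_all add: eval3_def)

lemma hom2: "poly (poly G w) x = poly (poly G [:poly w x:]) x"
  by (induction G rule: pCons_induct) simp_all



lemma dvd_case_c:
  fixes F :: "'a::{finite,field} poly poly poly"
  assumes hom: "homog_of_degree F d" and d: "d < CARD('a)" and c: "c \<noteq> 0"
    and van: "\<And>x y. eval3 F x y (-(a*x+b*y)/c) = 0"
  shows "linform a b c dvd F"
proof -
  define z0 where "z0 = [:[:0, -a/c:], [:-b/c:]:]"
  define R where "R = poly F z0"
  have Rsum: "R = (\<Sum>k\<le>d. coeff F k * z0^k)"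
    unfolding R_def by (rule poly_sum_le[OF homog_deg3(1)[OF hom]])
  have tz: "td2 z0 1" unfolding z0_def by (rule td2_z0)
  have "td2 R d" unfolding Rsum
  proof (rule td2_sum)
    fix k assume "k \<in> {..d}"
    then have "td2 (coeff F k * z0^k) ((d - k) + k * 1)"
      by (intro td2_mult td2_pow td2_coeffF[OF hom] tz)
    then show "td2 (coeff F k * z0^k) d" using \<open>k \<in> {..d}\<close> by simp
  qed
  moreover have "poly (poly R [:y:]) x = 0" for x y
  proof -
    have "poly (poly z0 [:y:]) x = -(a*x+b*y)/c" unfolding z0_def using c
      by (simp add: field_simps)
    then show ?thesis unfolding R_def hom3 using van by simp
  qed
  ultimately have "R = 0" using td2_zero d by blast
  then have "[:-z0, 1:] dvd F" unfolding R_def by (simp add: poly_eq_0_iff_dvd)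
  moreover have "[:-z0, 1:] = smult [:[:1/c:]:] (linform a b c)"
    unfolding z0_def linform_def using c by (simp add: one_pCons)
  ultimately show ?thesis by (metis dvd_smult dvd_trans dvd_refl)
qed

lemma coeffs_vanish_k:
  fixes F :: "'a::{finite,field} poly poly poly"
  assumes hom: "homog_of_degree F d" and d: "d < CARD('a)"
    and van: "\<And>z. eval3 F x y z = 0"
  shows "poly (poly (coeff F k) [:y:]) x = 0"
proof (cases "k \<le> d")
  case True
  show ?thesis
    using sum_roots_zero[OF d, of "\<lambda>k. poly (poly (coeff F k) [:y:]) x", OF _ True]
      van eval3_sum_k[OF homog_deg3(1)[OF hom]] by metis
next
  case False
  then show ?thesis using homog_deg3(1)[OF hom] by (simp add: coeff_eq_0)
qed

lemma dvd_case_b: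
  fixes F :: "'a::{finite,field} poly poly poly"
  assumes hom: "homog_of_degree F d" and d: "d < CARD('a)" and b: "b \<noteq> 0"
    and van: "\<And>x z. eval3 F x (-(a*x)/b) z = 0"
  shows "linform a b 0 dvd F"
proof -
  define L where "L = [:[:0, a:], [:b:]:]"
  have lf: "linform a b 0 = [:L:]" unfolding linform_def L_def by simp
  define y0 where "y0 = [:0, -a/b:]"
  have "L dvd coeff F k" for k
  proof -
    let ?G = "coeff F k"
    have "degree (poly ?G y0) \<le> d"
    proof -
      have tdG: "td2 ?G d" using td2_mono[OF td2_coeffF[OF hom, of k]] by simp
      have "poly ?G y0 = (\<Sum>j\<le>degree ?G. coeff ?G j * y0^j)" by (rule poly_altdef)
      also have "degree \<dots> \<le> d"
      proof (rule degree_sum_le_N)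
        fix j
        show "degree (coeff ?G j * y0^j) \<le> d"
        proof (cases "coeff ?G j = 0")
          case False
          then have "degree (coeff ?G j) + j \<le> d" using tdG unfolding td2_def by metis
          moreover have "degree (y0^j) \<le> j"
          proof -
            have dy: "degree y0 \<le> 1" unfolding y0_def by (rule order.trans[OF degree_pCons_le]) simp
            have "degree y0 * j \<le> 1 * j" using dy by (rule mult_le_mono1)
            then show ?thesis using degree_power_le[of y0 j] by linarith
          qed
          ultimately show ?thesis
            using degree_mult_le[of "coeff ?G j" "y0^j"] by linarith
        qed simp
      qed
      finally show ?thesis .
    qed
    moreover have "\<forall>x\<in>UNIV. poly (poly ?G y0) x = 0"
    proof
      fix x :: 'a
      have "poly (poly ?G y0) x = poly (poly ?G [:-(a*x)/b:]) x"
        by (subst hom2) (simp add: y0_def mult.commute)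
      also have "\<dots> = 0" by (rule coeffs_vanish_k[OF hom d van])
      finally show "poly (poly ?G y0) x = 0" .
    qed
    ultimately have "poly ?G y0 = 0"
      using poly_zero_many_roots[of UNIV "poly ?G y0"] d by simp
    then have "[:-y0, 1:] dvd ?G" by (simp add: poly_eq_0_iff_dvd)
    moreover have "[:-y0, 1:] = smult [:1/b:] L"
      unfolding y0_def L_def using b by (simp add: one_pCons)
    ultimately show ?thesis by (metis dvd_smult dvd_trans dvd_refl)
  qed
  then show ?thesis unfolding lf by (simp add: const_poly_dvd_iff)
qed

lemma sum_zero_pow: "(\<Sum>i\<le>n. c i * (0::'a::comm_semiring_1)^i) = c 0"
  by (induction n) simp_all

lemma dvd_case_a:
  fixes F :: "'a::{finite,field} poly poly poly"
  assumes hom: "homog_of_degree F d" and d: "d < CARD('a)" and a: "a \<noteq> 0"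
    and van: "\<And>y z. eval3 F 0 y z = 0"
  shows "linform a 0 0 dvd F"
proof -
  have lf: "linform a 0 0 = [:[:[:0, a:]:]:]" unfolding linform_def by simp
  have "coeff (coeff (coeff F k) j) 0 = 0" for j k
  proof (cases "j \<le> d")
    case True
    have "poly (poly (coeff F k) [:y:]) 0 = (\<Sum>j\<le>d. coeff (coeff (coeff F k) j) 0 * y^j)" for y
      using poly2_sum[OF homog_deg3(2,3)[OF hom], of k y 0] by (simp add: sum_zero_pow)
    then show ?thesis
      using sum_roots_zero[OF d, of "\<lambda>j. coeff (coeff (coeff F k) j) 0", OF _ True]
        coeffs_vanish_k[OF hom d van] by metis
  next
    case False
    then show ?thesis using homog_deg3(2)[OF hom, of k] by (simp add: coeff_eq_0)
  qed
  then have "[:0, a:] dvd coeff (coeff F k) j" for j k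
  proof -
    have "poly (coeff (coeff F k) j) 0 = 0"
      using \<open>coeff (coeff (coeff F k) j) 0 = 0\<close> by (simp add: poly_0_coeff_0)
    then have "[:-0, 1:] dvd coeff (coeff F k) j"
      using poly_eq_0_iff_dvd[of "coeff (coeff F k) j" 0] by blast
    moreover have "[:-0, 1:] = smult (1/a) [:0, a:]" using a by simp
    ultimately show ?thesis by (metis dvd_smult dvd_trans dvd_refl)
  qed
  then show ?thesis unfolding lf by (simp add: const_poly_dvd_iff)
qed



lemma line_small:
  fixes F :: "'a::{finite,field} poly poly poly"
  assumes hom: "homog_of_degree F d" and d: "d = CARD('a) - 1" and q: "CARD('a) \<ge> 2"
    and nlc: "no_linear_components F" and abc: "(a, b, c) \<noteq> (0, 0, 0)"
  shows "card (lset a b c \<inter> curve_points F) \<le> d"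
proof (rule ccontr)
  assume "\<not> ?thesis"
  then have big: "card (lset a b c \<inter> curve_points F) \<ge> CARD('a)" using d by linarith
  have dl: "d < CARD('a)" using d q by linarith
  have "linform a b c dvd F"
  proof (cases "c = 0")
    case False
    have cover: "\<And>x y z. a*x+b*y+c*z = 0 \<Longrightarrow> \<exists>s t. x = s*1+t*0 \<and> y = s*0+t*1 \<and> z = s*(-a/c)+t*(-b/c)"
    proof -
      fix x y z assume that: "a*x+b*y+c*z = 0"
      have "c*z = -(a*x+b*y)" using that by (simp add: algebra_simps eq_neg_iff_add_eq_0)
      then have "z = -(a*x+b*y)/c" using False by (simp add: field_simps)
      then have "z = x*(-a/c)+y*(-b/c)" by (simp add: add_divide_distrib diff_divide_distrib mult.commute)
      then show "\<exists>s t. x = s*1+t*0 \<and> y = s*0+t*1 \<and> z = s*(-a/c)+t*(-b/c)" by auto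
    qed
    show ?thesis
    proof (rule dvd_case_c[OF hom dl False])
      fix x y
      have "a*x+b*y+c*(-(a*x+b*y)/c) = 0" using False by simp
      then show "eval3 F x y (-(a*x+b*y)/c) = 0"
        using vanish_plane[OF hom d q cover big] by blast
    qed
  next
    case True
    note c0 = True
    show ?thesis
    proof (cases "b = 0")
      case False
      have cover: "\<And>x y z. a*x+b*y+c*z = 0 \<Longrightarrow> \<exists>s t. x = s*1+t*0 \<and> y = s*(-a/b)+t*0 \<and> z = s*0+t*1"
      proof -
        fix x y z assume that: "a*x+b*y+c*z = 0"
        have "b*y = -(a*x)" using that c0 by (simp add: algebra_simps eq_neg_iff_add_eq_0)
        then have "y = -(a*x)/b" using False by (simp add: field_simps)
        then have "y = x*(-a/b)" by (simp add: mult.commute)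
        then show "\<exists>s t. x = s*1+t*0 \<and> y = s*(-a/b)+t*0 \<and> z = s*0+t*1" by auto
      qed
      have "linform a b 0 dvd F"
      proof (rule dvd_case_b[OF hom dl False])
        fix x z
        have "a*x+b*(-(a*x)/b)+c*z = 0" using False c0 by simp
        then show "eval3 F x (-(a*x)/b) z = 0"
          using vanish_plane[OF hom d q cover big] by blast
      qed
      then show ?thesis using c0 by simp
    next
      case True
      then have a: "a \<noteq> 0" using abc c0 by simp
      have cover: "\<And>x y z. a*x+b*y+c*z = 0 \<Longrightarrow> \<exists>s t. x = s*0+t*0 \<and> y = s*1+t*0 \<and> z = s*0+t*1"
        using a True c0 by auto
      have "linform a 0 0 dvd F"
      proof (rule dvd_case_a[OF hom dl a])
        fix y z
        have "a*0+b*y+c*z = 0" using True c0 by simp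
        then show "eval3 F 0 y z = 0"
          using vanish_plane[OF hom d q cover big] by blast
      qed
      then show ?thesis using c0 True by simp
    qed
  qed
  then show False using nlc abc unfolding no_linear_components_def by blast
qed



declare cls.simps[simp del]

lemma card_nonzero: "card (UNIV - {0::'a::{finite,field}}) = CARD('a) - 1"
  by (simp add: card_Diff_singleton)

lemma card_ge2: "CARD('a::{finite,field}) \<ge> 2"
proof -
  have "card {0::'a, 1} = 2" by simp
  moreover have "card {0::'a, 1} \<le> CARD('a)" by (rule card_mono) simp_all
  ultimately show ?thesis by simp
qed

lemma card_cls:
  assumes nz: "(x, y, z) \<noteq> (0, 0, (0::'a::{finite,field}))"
  shows "card (cls (x, y, z)) = CARD('a) - 1"
proof -
  have eq: "cls (x, y, z) = (\<lambda>t. (t*x, t*y, t*z)) ` (UNIV - {0})"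
    unfolding cls.simps image_def by blast
  have "inj_on (\<lambda>t. (t*x, t*y, t*z)) (UNIV - {0})"
  proof (rule inj_onI)
    fix s t assume "(s*x, s*y, s*z) = (t*x, t*y, t*z)"
    then have "(s - t) * x = 0" "(s - t) * y = 0" "(s - t) * z = 0"
      by (simp_all add: algebra_simps)
    then show "s = t" using nz by auto
  qed
  then show ?thesis unfolding eq by (simp add: card_image card_nonzero)
qed

lemma cls_meet:
  assumes "p \<in> cls u" "p \<in> cls v" shows "cls u = cls v"
proof -
  obtain a b c where u: "u = (a, b, c)" by (cases u)
  obtain a' b' c' where v: "v = (a', b', c')" by (cases v)
  obtain x y z where p: "p = (x, y, z)" by (cases p)
  have "cls (x, y, z) = cls (a, b, c)" using assms(1) unfolding u p by (rule cls_eq_of_mem)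
  moreover have "cls (x, y, z) = cls (a', b', c')" using assms(2) unfolding v p by (rule cls_eq_of_mem)
  ultimately show ?thesis unfolding u v by simp
qed


lemma count_classes:
  fixes S :: "('a::{finite,field} \<times> 'a \<times> 'a) set"
  assumes z: "(0, 0, 0) \<notin> S"
    and cl: "\<And>x y z t. (x, y, z) \<in> S \<Longrightarrow> t \<noteq> 0 \<Longrightarrow> (t*x, t*y, t*z) \<in> S"
  shows "card (cls ` S) * (CARD('a) - 1) = card S"
proof -
  have U: "\<Union>(cls ` S) = S"
  proof
    show "\<Union>(cls ` S) \<subseteq> S"
    proof
      fix p assume "p \<in> \<Union>(cls ` S)"
      then obtain v where v: "v \<in> S" "p \<in> cls v" by blast
      obtain x y z where xyz: "v = (x, y, z)" by (cases v)
      obtain a b c where abc: "p = (a, b, c)" by (cases p)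
      have "(a, b, c) \<in> cls (x, y, z)" using v(2) xyz abc by simp
      then obtain t where "t \<noteq> 0" "a = t*x" "b = t*y" "c = t*z" unfolding cls_mem_iff by blast
      then show "p \<in> S" using v(1) cl xyz abc by simp
    qed
    show "S \<subseteq> \<Union>(cls ` S)"
    proof
      fix p assume "p \<in> S"
      obtain x y z where "p = (x, y, z)" by (cases p)
      then show "p \<in> \<Union>(cls ` S)" using \<open>p \<in> S\<close> cls_self by blast
    qed
  qed
  have "(CARD('a) - 1) * card (cls ` S) = card (\<Union>(cls ` S))"
  proof (rule card_partition)
    show "\<And>c. c \<in> cls ` S \<Longrightarrow> card c = CARD('a) - 1"
    proof -
      fix c assume "c \<in> cls ` S"
      then obtain v where v: "v \<in> S" "c = cls v" by blast
      obtain x y z where xyz: "v = (x, y, z)" by (cases v)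
      have "(x, y, z) \<noteq> (0, 0, 0)" using v(1) z xyz by auto
      then show "card c = CARD('a) - 1" using v(2) xyz card_cls by simp
    qed
    show "\<And>c1 c2. c1 \<in> cls ` S \<Longrightarrow> c2 \<in> cls ` S \<Longrightarrow> c1 \<noteq> c2 \<Longrightarrow> c1 \<inter> c2 = {}"
    proof -
      fix c1 c2 assume c: "c1 \<in> cls ` S" "c2 \<in> cls ` S" "c1 \<noteq> c2"
      obtain v1 where v1: "c1 = cls v1" using c(1) by blast
      obtain v2 where v2: "c2 = cls v2" using c(2) by blast
      show "c1 \<inter> c2 = {}"
      proof (rule ccontr)
        assume "c1 \<inter> c2 \<noteq> {}"
        then obtain p where "p \<in> cls v1" "p \<in> cls v2" using v1 v2 by blast
        then have "cls v1 = cls v2" by (rule cls_meet)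
        then show False using c(3) v1 v2 by simp
      qed
    qed
  qed simp_all
  then show ?thesis using U by (simp add: mult.commute)
qed

definition NZ :: "('a::zero \<times> 'a \<times> 'a) set" where "NZ = {v. v \<noteq> (0, 0, 0)}"

lemma proj_points_NZ: "proj_points = cls ` NZ"
proof
  show "proj_points \<subseteq> cls ` NZ"
  proof
    fix P assume "P \<in> proj_points"
    then obtain x y z where "P = cls (x, y, z)" "(x, y, z) \<noteq> (0, 0, 0)"
      unfolding proj_points_eq by blast
    then show "P \<in> cls ` NZ" unfolding NZ_def by blast
  qed
  show "cls ` NZ \<subseteq> proj_points"
  proof
    fix P assume "P \<in> cls ` NZ"
    then obtain v where v: "v \<in> NZ" "P = cls v" by blast
    obtain x y z where xyz: "v = (x, y, z)" by (cases v)
    have "(x, y, z) \<noteq> (0, 0, 0)" using v(1) xyz unfolding NZ_def by simp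
    then show "P \<in> proj_points" unfolding proj_points_eq using v(2) xyz by blast
  qed
qed

lemma card_NZ: "card (NZ :: ('a::{finite,field} \<times> 'a \<times> 'a) set) = CARD('a)^3 - 1"
proof -
  have "NZ = UNIV - {(0::'a, 0::'a, 0::'a)}" unfolding NZ_def by auto
  moreover have "card (UNIV :: ('a \<times> 'a \<times> 'a) set) = CARD('a)^3"
    by (simp add: UNIV_Times_UNIV[symmetric] card_cartesian_product power3_eq_cube del: UNIV_Times_UNIV)
  moreover have "card (UNIV - {(0::'a, 0::'a, 0::'a)}) = card (UNIV :: ('a \<times> 'a \<times> 'a) set) - 1"
    by (rule card_Diff_singleton) simp_all
  ultimately show ?thesis by simp
qed

lemma cube_id: "(n::nat) \<ge> 1 \<Longrightarrow> (n^2 + n + 1) * (n - 1) = n^3 - 1"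
proof -
  assume "n \<ge> 1"
  then obtain m where m: "n = m + 1" by (metis add.commute le_Suc_ex)
  have "((m+1)^2 + (m+1) + 1) * m + 1 = (m+1)^3"
    by (simp add: power2_eq_square power3_eq_cube algebra_simps)
  then show ?thesis unfolding m by simp
qed

lemma card_proj_points: "card (proj_points :: ('a::{finite,field} \<times> 'a \<times> 'a) set set) = CARD('a)^2 + CARD('a) + 1"
proof -
  let ?q = "CARD('a)"
  have "card (cls ` (NZ :: ('a \<times> 'a \<times> 'a) set)) * (?q - 1) = card (NZ :: ('a \<times> 'a \<times> 'a) set)"
    by (rule count_classes) (auto simp: NZ_def)
  then have "card (proj_points :: ('a \<times> 'a \<times> 'a) set set) * (?q - 1) = ?q^3 - 1"
    by (simp add: proj_points_NZ card_NZ)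
  moreover have "(?q^2 + ?q + 1) * (?q - 1) = ?q^3 - 1"
    using card_ge2[where 'a='a] by (intro cube_id) linarith
  ultimately have "card (proj_points :: ('a \<times> 'a \<times> 'a) set set) * (?q - 1) = (?q^2 + ?q + 1) * (?q - 1)"
    by simp
  moreover have "?q - 1 \<noteq> 0" using card_ge2[where 'a='a] by linarith
  ultimately show ?thesis using mult_right_cancel by blast
qed



definition Pl :: "'a::field \<Rightarrow> 'a \<Rightarrow> 'a \<Rightarrow> ('a \<times> 'a \<times> 'a) set" where
  "Pl a b c = {(x, y, z). a*x + b*y + c*z = 0}"

lemma Pl_mem [simp]: "(x, y, z) \<in> Pl a b c \<longleftrightarrow> a*x + b*y + c*z = 0"
  by (simp add: Pl_def)

lemma card_UNIV2: "card (UNIV :: ('a::finite \<times> 'a) set) = CARD('a)^2"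
  by (simp add: UNIV_Times_UNIV[symmetric] card_cartesian_product power2_eq_square del: UNIV_Times_UNIV)

lemma card_Pl:
  fixes a b c :: "'a::{finite,field}"
  assumes abc: "(a, b, c) \<noteq> (0, 0, 0)"
  shows "card (Pl a b c) = CARD('a)^2"
proof -
  have main: "card (Pl a b c) = card (UNIV :: ('a \<times> 'a) set)"
  proof (cases "c = 0")
    case False
    define f where "f = (\<lambda>(x::'a, y::'a). (x, y, -(a*x+b*y)/c))"
    have "Pl a b c = f ` UNIV"
    proof (rule set_eqI)
      fix p :: "'a \<times> 'a \<times> 'a"
      obtain x y z where p: "p = (x, y, z)" by (cases p)
      have "a*x + b*y + c*z = 0 \<longleftrightarrow> z = -(a*x+b*y)/c"
        using False by (auto simp: field_simps eq_neg_iff_add_eq_0 algebra_simps)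
      then show "p \<in> Pl a b c \<longleftrightarrow> p \<in> f ` UNIV"
        unfolding p f_def by (auto simp: image_iff)
    qed
    moreover have "inj f" unfolding f_def by (auto intro!: injI)
    ultimately show ?thesis by (simp add: card_image)
  next
    case True
    note c0 = True
    show ?thesis
    proof (cases "b = 0")
      case False
      define f where "f = (\<lambda>(x::'a, z::'a). (x, -(a*x)/b, z))"
      have "Pl a b c = f ` UNIV"
      proof (rule set_eqI)
        fix p :: "'a \<times> 'a \<times> 'a"
        obtain x y z where p: "p = (x, y, z)" by (cases p)
        have "a*x + b*y + c*z = 0 \<longleftrightarrow> y = -(a*x)/b"
          using False c0 by (auto simp: field_simps eq_neg_iff_add_eq_0 algebra_simps)
        then show "p \<in> Pl a b c \<longleftrightarrow> p \<in> f ` UNIV"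
          unfolding p f_def by (auto simp: image_iff)
      qed
      moreover have "inj f" unfolding f_def by (auto intro!: injI)
      ultimately show ?thesis by (simp add: card_image)
    next
      case True
      then have a: "a \<noteq> 0" using abc c0 by simp
      define f where "f = (\<lambda>(y::'a, z::'a). (0::'a, y, z))"
      have "Pl a b c = f ` UNIV"
      proof (rule set_eqI)
        fix p :: "'a \<times> 'a \<times> 'a"
        obtain x y z where p: "p = (x, y, z)" by (cases p)
        have "a*x + b*y + c*z = 0 \<longleftrightarrow> x = 0"
          using a True c0 by auto
        then show "p \<in> Pl a b c \<longleftrightarrow> p \<in> f ` UNIV"
          unfolding p f_def by (auto simp: image_iff)
      qed
      moreover have "inj f" unfolding f_def by (auto intro!: injI)
      ultimately show ?thesis by (simp add: card_image)
    qed
  qed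
  then show ?thesis by (simp add: card_UNIV2 power2_eq_square)
qed

lemma lset_eq_cls: "lset a b c = cls ` (Pl a b c - {(0, 0, 0)})"
proof
  show "lset a b c \<subseteq> cls ` (Pl a b c - {(0, 0, 0)})"
  proof
    fix X assume X: "X \<in> lset a b c"
    then have "X \<in> proj_points" unfolding lset_def by blast
    then obtain x y z where xyz: "X = cls (x, y, z)" "(x, y, z) \<noteq> (0, 0, 0)"
      unfolding proj_points_eq by blast
    then have "a*x + b*y + c*z = 0" using X lset_mem by metis
    then have "(x, y, z) \<in> Pl a b c - {(0, 0, 0)}" using xyz(2) by simp
    then show "X \<in> cls ` (Pl a b c - {(0, 0, 0)})" using xyz(1) by blast
  qed
  show "cls ` (Pl a b c - {(0, 0, 0)}) \<subseteq> lset a b c"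
  proof
    fix X assume "X \<in> cls ` (Pl a b c - {(0, 0, 0)})"
    then obtain v where v: "v \<in> Pl a b c - {(0, 0, 0)}" "X = cls v" by blast
    obtain x y z where xyz: "v = (x, y, z)" by (cases v)
    have "(x, y, z) \<noteq> (0, 0, 0)" "a*x + b*y + c*z = 0" using v(1) xyz by auto
    then show "X \<in> lset a b c" using lset_mem v(2) xyz by metis
  qed
qed

lemma card_lset:
  fixes a b c :: "'a::{finite,field}"
  assumes abc: "(a, b, c) \<noteq> (0, 0, 0)"
  shows "card (lset a b c) = CARD('a) + 1"
proof -
  let ?q = "CARD('a)"
  have "card (cls ` (Pl a b c - {(0, 0, 0)})) * (?q - 1) = card (Pl a b c - {(0, 0, 0)})"
  proof (rule count_classes)
    fix x y z t :: 'a
    assume "(x, y, z) \<in> Pl a b c - {(0, 0, 0)}" "t \<noteq> 0"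
    then have "a*x + b*y + c*z = 0" "(x, y, z) \<noteq> (0, 0, 0)" by auto
    moreover have "a*(t*x) + b*(t*y) + c*(t*z) = t * (a*x + b*y + c*z)" by (simp add: algebra_simps)
    ultimately show "(t*x, t*y, t*z) \<in> Pl a b c - {(0, 0, 0)}" using \<open>t \<noteq> 0\<close> by auto
  qed simp
  moreover have "card (Pl a b c - {(0, 0, 0)}) = ?q^2 - 1"
    using card_Pl[OF abc] by (simp add: card_Diff_singleton)
  ultimately have "card (lset a b c) * (?q - 1) = ?q^2 - 1" by (simp add: lset_eq_cls)
  moreover have "(?q + 1) * (?q - 1) = ?q^2 - 1"
    by (simp add: power2_eq_square algebra_simps)
  ultimately have "card (lset a b c) * (?q - 1) = (?q + 1) * (?q - 1)" by simp
  moreover have "?q - 1 \<noteq> 0" using card_ge2[where 'a='a] by linarith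
  ultimately show ?thesis using mult_right_cancel by blast
qed



lemma par_of_cross:
  fixes a b c x y z :: "'a::field"
  assumes nz: "(a, b, c) \<noteq> (0, 0, 0)"
    and c1: "b*z - c*y = 0" and c2: "c*x - a*z = 0" and c3: "a*y - b*x = 0"
  shows "\<exists>t. x = t*a \<and> y = t*b \<and> z = t*c"
proof (cases "a = 0")
  case False
  have "y = (x/a)*b" using c3 False by (simp add: field_simps algebra_simps)
  moreover have "z = (x/a)*c" using c2 False by (simp add: field_simps algebra_simps)
  moreover have "x = (x/a)*a" using False by simp
  ultimately show ?thesis by blast
next
  case True
  note a0 = True
  show ?thesis
  proof (cases "b = 0")
    case False
    have "x = (y/b)*a" using c3 a0 False by (simp add: field_simps)
    moreover have "z = (y/b)*c" using c1 False by (simp add: field_simps algebra_simps)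
    moreover have "y = (y/b)*b" using False by simp
    ultimately show ?thesis by blast
  next
    case True
    then have c: "c \<noteq> 0" using nz a0 by simp
    have "x = (z/c)*a" using c2 a0 c by (simp add: field_simps)
    moreover have "y = (z/c)*b" using c1 True c by (simp add: field_simps)
    moreover have "z = (z/c)*c" using c by simp
    ultimately show ?thesis by blast
  qed
qed

lemma cross_facts:
  fixes a b c a' b' c' :: "'a::field"
  assumes nz1: "(a, b, c) \<noteq> (0, 0, 0)" and nz2: "(a', b', c') \<noteq> (0, 0, 0)"
    and ne: "cls (a, b, c) \<noteq> cls (a', b', c')"
  defines "n1 \<equiv> b*c' - c*b'" and "n2 \<equiv> c*a' - a*c'" and "n3 \<equiv> a*b' - b*a'"
  shows "(n1, n2, n3) \<noteq> (0, 0, 0)"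
    and "a*n1 + b*n2 + c*n3 = 0" and "a'*n1 + b'*n2 + c'*n3 = 0"
    and "\<And>x y z. a*x + b*y + c*z = 0 \<Longrightarrow> a'*x + b'*y + c'*z = 0 \<Longrightarrow>
            \<exists>t. x = t*n1 \<and> y = t*n2 \<and> z = t*n3"
proof -
  show "(n1, n2, n3) \<noteq> (0, 0, 0)"
  proof
    assume "(n1, n2, n3) = (0, 0, 0)"
    then have "b*c' - c*b' = 0" "c*a' - a*c' = 0" "a*b' - b*a' = 0"
      unfolding n1_def n2_def n3_def by auto
    then obtain t where t: "a' = t*a" "b' = t*b" "c' = t*c"
      using par_of_cross[OF nz1] by metis
    then have "t \<noteq> 0" using nz2 by auto
    then have "cls (a', b', c') = cls (a, b, c)" using t cls_scale by simp
    then show False using ne by simp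
  qed
  show "a*n1 + b*n2 + c*n3 = 0" "a'*n1 + b'*n2 + c'*n3 = 0"
    unfolding n1_def n2_def n3_def by (simp_all add: algebra_simps)
  show "\<exists>t. x = t*n1 \<and> y = t*n2 \<and> z = t*n3"
    if h1: "a*x + b*y + c*z = 0" and h2: "a'*x + b'*y + c'*z = 0" for x y z
  proof (rule par_of_cross)
    show "(n1, n2, n3) \<noteq> (0, 0, 0)" by fact
    have e1: "n2*z - n3*y = a'*(a*x + b*y + c*z) - a*(a'*x + b'*y + c'*z)"
      unfolding n1_def n2_def n3_def by (simp add: algebra_simps)
    have e2: "n3*x - n1*z = b'*(a*x + b*y + c*z) - b*(a'*x + b'*y + c'*z)"
      unfolding n1_def n2_def n3_def by (simp add: algebra_simps)
    have e3: "n1*y - n2*x = c'*(a*x + b*y + c*z) - c*(a'*x + b'*y + c'*z)"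
      unfolding n1_def n2_def n3_def by (simp add: algebra_simps)
    show "n2*z - n3*y = 0" "n3*x - n1*z = 0" "n1*y - n2*x = 0"
      using e1 e2 e3 h1 h2 by simp_all
  qed
qed

lemma Pl_scale:
  fixes t a b c :: "'a::field"
  shows "t \<noteq> 0 \<Longrightarrow> Pl (t*a) (t*b) (t*c) = Pl a b c"
proof (rule set_eqI)
  fix p :: "'a \<times> 'a \<times> 'a" assume t: "t \<noteq> 0"
  obtain x y z where p: "p = (x, y, z)" by (cases p)
  have "t*a*x + t*b*y + t*c*z = t * (a*x + b*y + c*z)" by (simp add: algebra_simps)
  then show "p \<in> Pl (t*a) (t*b) (t*c) \<longleftrightarrow> p \<in> Pl a b c" using t p by simp
qed

lemma lset_scale:
  fixes t a b c :: "'a::field"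
  shows "t \<noteq> 0 \<Longrightarrow> lset (t*a) (t*b) (t*c) = lset a b c"
  by (simp add: lset_eq_cls Pl_scale)

lemma lset_cls_eq:
  fixes a b c a' b' c' :: "'a::{finite,field}"
  assumes nz1: "(a, b, c) \<noteq> (0, 0, 0)" and nz2: "(a', b', c') \<noteq> (0, 0, 0)"
  shows "lset a b c = lset a' b' c' \<longleftrightarrow> cls (a, b, c) = cls (a', b', c')"
proof
  assume "cls (a, b, c) = cls (a', b', c')"
  then have "(a, b, c) \<in> cls (a', b', c')" using cls_self[of a b c] by simp
  then obtain t where "t \<noteq> 0" "a = t*a'" "b = t*b'" "c = t*c'" unfolding cls_mem_iff by blast
  then show "lset a b c = lset a' b' c'" using lset_scale by simp
next
  assume eq: "lset a b c = lset a' b' c'"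
  show "cls (a, b, c) = cls (a', b', c')"
  proof (rule ccontr)
    assume ne: "cls (a, b, c) \<noteq> cls (a', b', c')"
    define n1 where "n1 = b*c' - c*b'"
    define n2 where "n2 = c*a' - a*c'"
    define n3 where "n3 = a*b' - b*a'"
    note cf = cross_facts[OF nz1 nz2 ne, folded n1_def n2_def n3_def]
    have "lset a b c \<subseteq> {cls (n1, n2, n3)}"
    proof
      fix X assume X: "X \<in> lset a b c"
      then obtain v where v: "v \<in> Pl a b c - {(0, 0, 0)}" "X = cls v"
        unfolding lset_eq_cls by blast
      obtain x y z where xyz: "v = (x, y, z)" by (cases v)
      have "X \<in> lset a' b' c'" using X eq by simp
      then obtain v' where v': "v' \<in> Pl a' b' c' - {(0, 0, 0)}" "X = cls v'"
        unfolding lset_eq_cls by blast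
      obtain x' y' z' where xyz': "v' = (x', y', z')" by (cases v')
      have "cls (x, y, z) = cls (x', y', z')" using v(2) v'(2) xyz xyz' by simp
      then have "(x, y, z) \<in> cls (x', y', z')" using cls_self[of x y z] by simp
      then obtain s where s: "s \<noteq> 0" "x = s*x'" "y = s*y'" "z = s*z'" unfolding cls_mem_iff by blast
      have h1: "a*x + b*y + c*z = 0" using v(1) xyz by simp
      have "a'*x' + b'*y' + c'*z' = 0" using v'(1) xyz' by simp
      moreover have "a'*x + b'*y + c'*z = s * (a'*x' + b'*y' + c'*z')"
        using s by (simp add: algebra_simps)
      ultimately have h2: "a'*x + b'*y + c'*z = 0" by simp
      obtain t where t: "x = t*n1" "y = t*n2" "z = t*n3" using cf(4)[OF h1 h2] by blast
      have "t \<noteq> 0" using t v(1) xyz by auto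
      then show "X \<in> {cls (n1, n2, n3)}" using v(2) xyz t cls_scale by simp
    qed
    then have "card (lset a b c) \<le> card {cls (n1, n2, n3)}" by (rule card_mono[rotated]) simp
    then have "card (lset a b c) \<le> 1" by simp
    moreover have "card (lset a b c) = CARD('a) + 1" by (rule card_lset[OF nz1])
    ultimately show False using card_ge2[where 'a='a] by simp
  qed
qed



lemma card_image_same_kernel:
  assumes "\<And>x y. x \<in> A \<Longrightarrow> y \<in> A \<Longrightarrow> f x = f y \<longleftrightarrow> g x = g y"
  shows "card (f ` A) = card (g ` A)"
proof -
  define h where "h = (\<lambda>Y. f (inv_into A g Y))"
  have key: "h (g x) = f x" if "x \<in> A" for x
  proof -
    have "inv_into A g (g x) \<in> A" using that by (simp add: inv_into_into)
    moreover have "g (inv_into A g (g x)) = g x" using that by (simp add: f_inv_into_f)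
    ultimately show ?thesis unfolding h_def using assms that by blast
  qed
  have "bij_betw h (g ` A) (f ` A)"
  proof (rule bij_betw_imageI)
    show "inj_on h (g ` A)"
    proof (rule inj_onI)
      fix Y1 Y2 assume "Y1 \<in> g ` A" "Y2 \<in> g ` A" "h Y1 = h Y2"
      then obtain x1 x2 where "x1 \<in> A" "x2 \<in> A" "Y1 = g x1" "Y2 = g x2" "h (g x1) = h (g x2)" by blast
      then show "Y1 = Y2" using key assms by metis
    qed
    show "h ` g ` A = f ` A"
      using key by (auto simp: image_iff)
  qed
  then show ?thesis by (simp add: bij_betw_same_card)
qed

lemma proj_lines_img: "proj_lines = (\<lambda>(a, b, c). lset a b c) ` NZ"
proof
  show "proj_lines \<subseteq> (\<lambda>(a, b, c). lset a b c) ` NZ"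
  proof
    fix l assume "l \<in> proj_lines"
    then obtain a b c where "l = lset a b c" "(a, b, c) \<noteq> (0, 0, 0)"
      unfolding proj_lines_eq by blast
    then show "l \<in> (\<lambda>(a, b, c). lset a b c) ` NZ" unfolding NZ_def by force
  qed
  show "(\<lambda>(a, b, c). lset a b c) ` NZ \<subseteq> proj_lines"
  proof
    fix l assume "l \<in> (\<lambda>(a, b, c). lset a b c) ` NZ"
    then obtain v where v: "v \<in> NZ" "l = (\<lambda>(a, b, c). lset a b c) v" by blast
    obtain a b c where abc: "v = (a, b, c)" by (cases v)
    have "(a, b, c) \<noteq> (0, 0, 0)" using v(1) abc unfolding NZ_def by simp
    moreover have "l = lset a b c" using v(2) abc by simp
    ultimately show "l \<in> proj_lines" unfolding proj_lines_eq by blast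
  qed
qed

lemma kernel_lset_cls:
  fixes S :: "('a::{finite,field} \<times> 'a \<times> 'a) set"
  assumes "(0, 0, 0) \<notin> S"
  shows "card ((\<lambda>(a, b, c). lset a b c) ` S) = card (cls ` S)"
proof (rule card_image_same_kernel)
  fix v w assume vw: "v \<in> S" "w \<in> S"
  obtain a b c where v: "v = (a, b, c)" by (cases v)
  obtain a' b' c' where w: "w = (a', b', c')" by (cases w)
  have "(a, b, c) \<noteq> (0, 0, 0)" "(a', b', c') \<noteq> (0, 0, 0)" using vw v w assms by auto
  then show "(\<lambda>(a, b, c). lset a b c) v = (\<lambda>(a, b, c). lset a b c) w \<longleftrightarrow> cls v = cls w"
    using lset_cls_eq v w by simp
qed

lemma card_proj_lines: "card (proj_lines :: ('a::{finite,field} \<times> 'a \<times> 'a) set set set) = CARD('a)^2 + CARD('a) + 1"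
proof -
  have "card (proj_lines :: ('a \<times> 'a \<times> 'a) set set set) = card (cls ` (NZ :: ('a \<times> 'a \<times> 'a) set))"
    unfolding proj_lines_img by (rule kernel_lset_cls) (simp add: NZ_def)
  then show ?thesis by (simp add: proj_points_NZ[symmetric] card_proj_points)
qed

lemma lines_through_eq:
  fixes x y z :: "'a::field"
  assumes nz: "(x, y, z) \<noteq> (0, 0, 0)"
  shows "{l \<in> proj_lines. cls (x, y, z) \<in> l} = (\<lambda>(a, b, c). lset a b c) ` (Pl x y z - {(0, 0, 0)})"
proof
  show "{l \<in> proj_lines. cls (x, y, z) \<in> l} \<subseteq> (\<lambda>(a, b, c). lset a b c) ` (Pl x y z - {(0, 0, 0)})"
  proof
    fix l assume l: "l \<in> {l \<in> proj_lines. cls (x, y, z) \<in> l}"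
    then obtain a b c where abc: "l = lset a b c" "(a, b, c) \<noteq> (0, 0, 0)"
      unfolding proj_lines_eq by blast
    have "a*x + b*y + c*z = 0" using l abc lset_mem[OF nz] by blast
    then have "(a, b, c) \<in> Pl x y z - {(0, 0, 0)}" using abc(2) by (simp add: ac_simps)
    then show "l \<in> (\<lambda>(a, b, c). lset a b c) ` (Pl x y z - {(0, 0, 0)})"
      using abc(1) by force
  qed
  show "(\<lambda>(a, b, c). lset a b c) ` (Pl x y z - {(0, 0, 0)}) \<subseteq> {l \<in> proj_lines. cls (x, y, z) \<in> l}"
  proof
    fix l assume "l \<in> (\<lambda>(a, b, c). lset a b c) ` (Pl x y z - {(0, 0, 0)})"
    then obtain v where v: "v \<in> Pl x y z - {(0, 0, 0)}" "l = (\<lambda>(a, b, c). lset a b c) v" by blast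
    obtain a b c where abc: "v = (a, b, c)" by (cases v)
    have nz': "(a, b, c) \<noteq> (0, 0, 0)" and "x*a + y*b + z*c = 0" using v(1) abc by auto
    then have "a*x + b*y + c*z = 0" by (simp add: ac_simps)
    then have "cls (x, y, z) \<in> lset a b c" using lset_mem[OF nz] by blast
    moreover have "lset a b c \<in> proj_lines" unfolding proj_lines_eq using nz' by blast
    ultimately show "l \<in> {l \<in> proj_lines. cls (x, y, z) \<in> l}" using v(2) abc by simp
  qed
qed

lemma card_lines_through:
  fixes x y z :: "'a::{finite,field}"
  assumes nz: "(x, y, z) \<noteq> (0, 0, 0)"
  shows "card {l \<in> proj_lines. cls (x, y, z) \<in> l} = CARD('a) + 1"
proof -
  have "card {l \<in> proj_lines. cls (x, y, z) \<in> l} = card (cls ` (Pl x y z - {(0, 0, 0)}))"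
    unfolding lines_through_eq[OF nz] by (rule kernel_lset_cls) simp
  also have "\<dots> = card (lset x y z)" by (simp add: lset_eq_cls)
  also have "\<dots> = CARD('a) + 1" by (rule card_lset[OF nz])
  finally show ?thesis .
qed

lemma lines_through_two:
  fixes a b c a' b' c' :: "'a::{finite,field}"
  assumes nz1: "(a, b, c) \<noteq> (0, 0, 0)" and nz2: "(a', b', c') \<noteq> (0, 0, 0)"
    and ne: "cls (a, b, c) \<noteq> cls (a', b', c')"
  shows "card {l \<in> proj_lines. cls (a, b, c) \<in> l \<and> cls (a', b', c') \<in> l} = 1"
proof -
  define n1 where "n1 = b*c' - c*b'"
  define n2 where "n2 = c*a' - a*c'"
  define n3 where "n3 = a*b' - b*a'"
  note cf = cross_facts[OF nz1 nz2 ne, folded n1_def n2_def n3_def]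
  have "{l \<in> proj_lines. cls (a, b, c) \<in> l \<and> cls (a', b', c') \<in> l} = {lset n1 n2 n3}"
  proof
    show "{l \<in> proj_lines. cls (a, b, c) \<in> l \<and> cls (a', b', c') \<in> l} \<subseteq> {lset n1 n2 n3}"
    proof
      fix l assume l: "l \<in> {l \<in> proj_lines. cls (a, b, c) \<in> l \<and> cls (a', b', c') \<in> l}"
      then obtain \<alpha> \<beta> \<gamma> where abc: "l = lset \<alpha> \<beta> \<gamma>" "(\<alpha>, \<beta>, \<gamma>) \<noteq> (0, 0, 0)"
        unfolding proj_lines_eq by blast
      have "\<alpha>*a + \<beta>*b + \<gamma>*c = 0" using l abc lset_mem[OF nz1] by blast
      then have h1: "a*\<alpha> + b*\<beta> + c*\<gamma> = 0" by (simp add: ac_simps)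
      have "\<alpha>*a' + \<beta>*b' + \<gamma>*c' = 0" using l abc lset_mem[OF nz2] by blast
      then have h2: "a'*\<alpha> + b'*\<beta> + c'*\<gamma> = 0" by (simp add: ac_simps)
      obtain t where t: "\<alpha> = t*n1" "\<beta> = t*n2" "\<gamma> = t*n3" using cf(4)[OF h1 h2] by blast
      then have "t \<noteq> 0" using abc(2) by auto
      then have "l = lset n1 n2 n3" using abc(1) t lset_scale by simp
      then show "l \<in> {lset n1 n2 n3}" by simp
    qed
    show "{lset n1 n2 n3} \<subseteq> {l \<in> proj_lines. cls (a, b, c) \<in> l \<and> cls (a', b', c') \<in> l}"
    proof -
      have "lset n1 n2 n3 \<in> proj_lines" unfolding proj_lines_eq using cf(1) by blast
      moreover have "n1*a + n2*b + n3*c = 0" using cf(2) by (simp add: ac_simps)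
      then have "cls (a, b, c) \<in> lset n1 n2 n3" using lset_mem[OF nz1] by blast
      moreover have "n1*a' + n2*b' + n3*c' = 0" using cf(3) by (simp add: ac_simps)
      then have "cls (a', b', c') \<in> lset n1 n2 n3" using lset_mem[OF nz2] by blast
      ultimately show ?thesis by blast
    qed
  qed
  then show ?thesis by simp
qed



lemma double_count:
  assumes "finite L" "finite A"
  shows "(\<Sum>l\<in>L. card {x\<in>A. R l x}) = (\<Sum>x\<in>A. card {l\<in>L. R l x})"
proof -
  have "(\<Sum>l\<in>L. card {x\<in>A. R l x}) = (\<Sum>l\<in>L. \<Sum>x\<in>A. if R l x then 1 else 0)"
    using assms by (simp add: sum.If_cases Int_def)
  also have "\<dots> = (\<Sum>x\<in>A. \<Sum>l\<in>L. if R l x then 1 else 0)" by (rule sum.swap)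
  also have "\<dots> = (\<Sum>x\<in>A. card {l\<in>L. R l x})"
    using assms by (simp add: sum.If_cases Int_def)
  finally show ?thesis .
qed

lemma regroup:
  fixes f :: "nat \<Rightarrow> int"
  assumes "finite L" "finite I" "g ` L \<subseteq> I"
  shows "(\<Sum>i\<in>I. f i * int (card {l\<in>L. g l = i})) = (\<Sum>l\<in>L. f (g l))"
proof -
  have "(\<Sum>l\<in>L. f (g l)) = (\<Sum>i\<in>I. \<Sum>l\<in>{l. l \<in> L \<and> g l = i}. f (g l))"
    using sum.group[OF assms, of "\<lambda>l. f (g l)"] by simp
  also have "\<dots> = (\<Sum>i\<in>I. f i * int (card {l\<in>L. g l = i}))"
  proof (rule sum.cong[OF refl])
    fix i
    have "(\<Sum>l\<in>{l. l \<in> L \<and> g l = i}. f (g l)) = (\<Sum>l\<in>{l. l \<in> L \<and> g l = i}. f i)"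
      by (rule sum.cong) auto
    then show "(\<Sum>l\<in>{l. l \<in> L \<and> g l = i}. f (g l)) = f i * int (card {l\<in>L. g l = i})"
      by (simp add: mult.commute)
  qed
  finally show ?thesis by simp
qed

lemma point_cls:
  assumes "P \<in> proj_points"
  obtains x y z where "P = cls (x, y, z)" "(x, y, z) \<noteq> (0, 0, 0)"
  using assms unfolding proj_points_eq by blast

lemma curve_sub: "curve_points F \<subseteq> proj_points"
  unfolding curve_points_def by blast

lemma finite_sets: "finite (S :: ('a::finite \<times> 'a \<times> 'a) set set)" "finite (T :: ('a::finite \<times> 'a \<times> 'a) set set set)"
  by (rule finite_subset[of _ UNIV], simp, simp)+

lemma S1:
  fixes F :: "'a::{finite,field} poly poly poly"
  shows "(\<Sum>l\<in>proj_lines. card (l \<inter> curve_points F)) = card (curve_points F) * (CARD('a) + 1)"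
proof -
  let ?C = "curve_points F"
  have "(\<Sum>l\<in>proj_lines. card (l \<inter> ?C)) = (\<Sum>l\<in>proj_lines. card {P\<in>?C. P \<in> l})"
    by (rule sum.cong) (auto intro: arg_cong[where f=card])
  also have "\<dots> = (\<Sum>P\<in>?C. card {l\<in>proj_lines. P \<in> l})"
    by (rule double_count) (simp_all add: finite_sets)
  also have "\<dots> = (\<Sum>P\<in>?C. CARD('a) + 1)"
  proof (rule sum.cong[OF refl])
    fix P assume "P \<in> ?C"
    then have "P \<in> proj_points" using curve_sub by blast
    then obtain x y z where "P = cls (x, y, z)" "(x, y, z) \<noteq> (0, 0, 0)" by (rule point_cls)
    then show "card {l\<in>proj_lines. P \<in> l} = CARD('a) + 1" using card_lines_through by simp
  qed
  finally show ?thesis by simp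
qed

lemma S2:
  fixes F :: "'a::{finite,field} poly poly poly"
  shows "(\<Sum>l\<in>proj_lines. card (l \<inter> curve_points F)^2) = card (curve_points F) * (card (curve_points F) + CARD('a))"
proof -
  let ?C = "curve_points F"
  let ?N = "card ?C"
  let ?q = "CARD('a)"
  have "(\<Sum>l\<in>proj_lines. card (l \<inter> ?C)^2) = (\<Sum>l\<in>proj_lines. card {PQ\<in>?C \<times> ?C. fst PQ \<in> l \<and> snd PQ \<in> l})"
  proof (rule sum.cong[OF refl])
    fix l
    have "{PQ\<in>?C \<times> ?C. fst PQ \<in> l \<and> snd PQ \<in> l} = (l \<inter> ?C) \<times> (l \<inter> ?C)" by auto
    then show "card (l \<inter> ?C)^2 = card {PQ\<in>?C \<times> ?C. fst PQ \<in> l \<and> snd PQ \<in> l}"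
      by (simp add: card_cartesian_product power2_eq_square)
  qed
  also have "\<dots> = (\<Sum>PQ\<in>?C \<times> ?C. card {l\<in>proj_lines. fst PQ \<in> l \<and> snd PQ \<in> l})"
    by (rule double_count) (simp_all add: finite_sets)
  also have "\<dots> = (\<Sum>P\<in>?C. \<Sum>Q\<in>?C. card {l\<in>proj_lines. P \<in> l \<and> Q \<in> l})"
    by (simp add: sum.cartesian_product split_beta')
  also have "\<dots> = (\<Sum>P\<in>?C. \<Sum>Q\<in>?C. 1 + (if P = Q then ?q else 0))"
  proof (intro sum.cong[OF refl])
    fix P Q assume PQ: "P \<in> ?C" "Q \<in> ?C"
    then have "P \<in> proj_points" "Q \<in> proj_points" using curve_sub by blast+
    then obtain x y z x' y' z' where p: "P = cls (x, y, z)" "(x, y, z) \<noteq> (0, 0, 0)"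
      and q: "Q = cls (x', y', z')" "(x', y', z') \<noteq> (0, 0, 0)" by (metis point_cls)
    show "card {l\<in>proj_lines. P \<in> l \<and> Q \<in> l} = 1 + (if P = Q then ?q else 0)"
    proof (cases "P = Q")
      case True
      then show ?thesis using card_lines_through[OF p(2)] p(1) by simp
    next
      case False
      then show ?thesis using lines_through_two[OF p(2) q(2)] p(1) q(1) by simp
    qed
  qed
  also have "\<dots> = (\<Sum>P\<in>?C. ?N + ?q)"
  proof (rule sum.cong[OF refl])
    fix P assume "P \<in> ?C"
    have "(\<Sum>Q\<in>?C. 1 + (if P = Q then ?q else 0)) = ?N + (\<Sum>Q\<in>?C. if P = Q then ?q else 0)"
      unfolding sum.distrib by simp
    also have "(\<Sum>Q\<in>?C. if P = Q then ?q else 0) = ?q"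
      using \<open>P \<in> ?C\<close> finite_sets(1)[of ?C] by (simp add: sum.delta)
    finally show "(\<Sum>Q\<in>?C. 1 + (if P = Q then ?q else 0)) = ?N + ?q" .
  qed
  finally show ?thesis by simp
qed



lemma alg_id:
  fixes Q K :: int
  shows "(Q - 1)^2 * ((Q - 1)^2 + Q) - (K + Q - 2) * ((Q - 1)^2 * (Q + 1)) + K * (Q - 2) * (Q^2 + Q + 1)
         = 3 * (Q - 1)^2 - 3 * K"
  by (simp add: algebra_simps power2_eq_square)

theorem lemma3p14:
  fixes F :: "'a::{finite, field} poly poly poly"
  assumes "CARD('a) \<ge> 5"
    and "homog_of_degree F (CARD('a) - 1)"
    and "no_linear_components F"
    and "card (curve_points F) = (CARD('a) - 1)^2"
  shows "(\<Sum>i = k0 F..CARD('a) - 1. (int i - int (k0 F)) * (int i - int CARD('a) + 2) * int (line_count F i))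
           = 3 * (int CARD('a) - 1)^2 - 3 * int (k0 F)
       \<and> (int CARD('a) - int (k0 F) - 1) * int (line_count F (CARD('a) - 1)) \<ge> 3 * (int CARD('a) - 1)^2 - 3 * int (k0 F)"
proof -
  let ?q = "CARD('a)"
  let ?C = "curve_points F"
  let ?L = "proj_lines :: ('a \<times> 'a \<times> 'a) set set set"
  let ?k = "k0 F"
  define c where "c = (\<lambda>l. card (l \<inter> ?C))"
  have q2: "?q \<ge> 2" using assms(1) by linarith
  have hom: "homog_of_degree F (?q - 1)" by (rule assms(2))
  have small: "c l \<le> ?q - 1" if lL: "l \<in> ?L" for l
  proof -
    obtain a b c' where "l = lset a b c'" "(a, b, c') \<noteq> (0, 0, 0)"
      using lL unfolding proj_lines_eq by blast
    then show ?thesis unfolding c_def using line_small[OF hom refl q2 assms(3)] by simp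
  qed
  have cardL: "card ?L = ?q^2 + ?q + 1" by (rule card_proj_lines)
  then have "?L \<noteq> {}" by auto
  then obtain l0 where l0: "l0 \<in> ?L" by blast
  have lc_eq: "line_count F i = card {l\<in>?L. c l = i}" for i
    unfolding line_count_def c_def by simp
  have lc_pos: "line_count F (c l) \<noteq> 0" if "l \<in> ?L" for l
  proof -
    have "l \<in> {l'\<in>?L. c l' = c l}" using that by simp
    then have "{l'\<in>?L. c l' = c l} \<noteq> {}" by blast
    moreover have "finite {l'\<in>?L. c l' = c l}" by (simp add: finite_sets)
    ultimately show ?thesis unfolding lc_eq by simp
  qed
  have k_le: "?k \<le> c l" if "l \<in> ?L" for l
    unfolding k0_def using lc_pos[OF that] by (rule Least_le)
  have k_le_q: "?k \<le> ?q - 1" using k_le[OF l0] small[OF l0] by linarith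
  define f where "f = (\<lambda>i::nat. (int i - int ?k) * (int i - int ?q + 2))"
  have range: "c ` ?L \<subseteq> {?k..?q - 1}" using k_le small by auto
  have T_eq: "(\<Sum>i = ?k..?q - 1. (int i - int ?k) * (int i - int ?q + 2) * int (line_count F i))
        = (\<Sum>l\<in>?L. f (c l))"
    unfolding lc_eq using regroup[OF finite_sets(2) _ range, of f] by (simp add: f_def)
  have S1': "(\<Sum>l\<in>?L. int (c l)) = int (card ?C) * (int ?q + 1)"
  proof -
    have "(\<Sum>l\<in>?L. c l) = card ?C * (?q + 1)" unfolding c_def by (rule S1)
    then have "int (\<Sum>l\<in>?L. c l) = int (card ?C * (?q + 1))" by simp
    then show ?thesis by (simp add: algebra_simps)
  qed
  have S2': "(\<Sum>l\<in>?L. int (c l)^2) = int (card ?C) * (int (card ?C) + int ?q)"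
  proof -
    have "(\<Sum>l\<in>?L. (c l)^2) = card ?C * (card ?C + ?q)" unfolding c_def by (rule S2)
    then have "int (\<Sum>l\<in>?L. (c l)^2) = int (card ?C * (card ?C + ?q))" by simp
    then show ?thesis by (simp add: algebra_simps)
  qed
  have "(\<Sum>l\<in>?L. f (c l)) = (\<Sum>l\<in>?L. int (c l)^2 - (int ?k + int ?q - 2) * int (c l) + int ?k * (int ?q - 2))"
    unfolding f_def by (rule sum.cong[OF refl]) (simp add: algebra_simps power2_eq_square)
  also have "\<dots> = (\<Sum>l\<in>?L. int (c l)^2) - (int ?k + int ?q - 2) * (\<Sum>l\<in>?L. int (c l)) + int ?k * (int ?q - 2) * int (card ?L)"
    by (simp add: sum.distrib sum_subtractf sum_distrib_left)
  also have "\<dots> = 3 * (int ?q - 1)^2 - 3 * int ?k"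
  proof -
    have N: "int (card ?C) = (int ?q - 1)^2" using assms(4) q2 by (simp add: of_nat_diff)
    have Lc: "int (card ?L) = (int ?q)^2 + int ?q + 1" using cardL by simp
    show ?thesis unfolding S1' S2' N Lc by (rule alg_id)
  qed
  finally have part1: "(\<Sum>i = ?k..?q - 1. (int i - int ?k) * (int i - int ?q + 2) * int (line_count F i))
        = 3 * (int ?q - 1)^2 - 3 * int ?k" using T_eq by simp
  have part2: "(\<Sum>i = ?k..?q - 1. (int i - int ?k) * (int i - int ?q + 2) * int (line_count F i))
        \<le> (int ?q - int ?k - 1) * int (line_count F (?q - 1))"
  proof -
    let ?g = "\<lambda>i. (int i - int ?k) * (int i - int ?q + 2) * int (line_count F i)"
    have "(\<Sum>i = ?k..?q - 1. ?g i) = ?g (?q - 1) + (\<Sum>i \<in> {?k..?q - 1} - {?q - 1}. ?g i)"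
      using k_le_q by (intro sum.remove) auto
    moreover have "(\<Sum>i \<in> {?k..?q - 1} - {?q - 1}. ?g i) \<le> 0"
    proof (rule sum_nonpos)
      fix i assume i: "i \<in> {?k..?q - 1} - {?q - 1}"
      then have "int i - int ?k \<ge> 0" "int i - int ?q + 2 \<le> 0" using q2 by auto
      then have "(int i - int ?k) * (int i - int ?q + 2) \<le> 0" by (rule mult_nonneg_nonpos)
      then show "?g i \<le> 0" by (rule mult_nonpos_nonneg) simp
    qed
    moreover have "?g (?q - 1) = (int ?q - int ?k - 1) * int (line_count F (?q - 1))"
      using q2 by (simp add: of_nat_diff)
    ultimately show ?thesis by linarith
  qed
  show ?thesis using part1 part2 by simp
qed

end
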